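(* Let $G=(V,E)$ be a $2$-vertex-twinless-connected directed graph. Consider the following algorithm. (1) Compute a minimal $2$-vertex-connected spanning subgraph $G_{2v}=(V,E_{2v})$ of $G$ (i.e. $E_{2v}\subseteq E$, $(V,E_{2v})$ is $2$-vertex-connected, and removing any edge of $E_{2v}$ destroys $2$-vertex-connectivity). (2) Set $E_{2t}\leftarrow E_{2v}$ and $G_{2t}=(V,E_{2t})$. (3) Compute the twinless articulation points of $G_{2v}$. (4) For each twinless articulation point $x$ of $G_{2v}$: while $G_{2t}\setminus\{x\}$ (the graph obtained from the current $G_{2t}$ by deleting $x$) is not twinless strongly connected, compute the twinless strongly connected components of $G_{2t}\setminus\{x\}$, find an edge $(v,w)\in E\setminus E_{2t}$ such that $v,w$ lie in distinct twinless strongly connected components of $G_{2t}\setminus\{x\}$, and add $(v,w)$ to $E_{2t}$. Then the output graph $G_{2t}=(V,E_{2t})$ is $2$-vertex-twinless-connected.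
   Context: Directed graphs are finite. A directed graph is strongly connected if for all vertices $u,w$ there is a directed path from $u$ to $w$. A vertex of a strongly connected graph is a strong articulation point if its deletion leaves a graph that is not strongly connected. A directed graph is $2$-vertex-connected if it is strongly connected, has at least $3$ vertices and has no strong articulation points. Vertices $a,b$ are twinless strongly connected if there exist a directed path $p$ from $a$ to $b$ and a directed path $q$ from $b$ to $a$ such that for every edge $(x,y)$ of $p$, the edge $(y,x)$ is not in $q$; this is an equivalence relation whose classes are the twinless strongly connected components. A graph is twinless strongly connected if it has exactly one twinless strongly connected component. A vertex $v$ of a twinless strongly connected graph $H$ is a twinless articulation point if $H$ minus $v$ is not twinless strongly connected. A directed graph $H=(V,F)$ is $2$-vertex-twinless-connected if it is twinless strongly connected, $|V|\geq 3$, and it has no twinless articulation points. *)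

theory Defs
  imports Main
begin

definition del_vertex :: "'a set \<Rightarrow> ('a \<times> 'a) set \<Rightarrow> 'a \<Rightarrow> 'a set \<times> ('a \<times> 'a) set" where
  "del_vertex V E x = (V - {x}, {(a, b). (a, b) \<in> E \<and> a \<noteq> x \<and> b \<noteq> x})"

definition strongly_connected :: "'a set \<Rightarrow> ('a \<times> 'a) set \<Rightarrow> bool" where
  "strongly_connected V E \<longleftrightarrow> (\<forall>u\<in>V. \<forall>w\<in>V. (u, w) \<in> (E \<inter> (V \<times> V))\<^sup>*)"

definition strong_articulation_point :: "'a set \<Rightarrow> ('a \<times> 'a) set \<Rightarrow> 'a \<Rightarrow> bool" where
  "strong_articulation_point V E v \<longleftrightarrow>
     strongly_connected V E \<and> v \<in> V \<and> \<not> strongly_connected (fst (del_vertex V E v)) (snd (del_vertex V E v))"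

definition two_vertex_connected :: "'a set \<Rightarrow> ('a \<times> 'a) set \<Rightarrow> bool" where
  "two_vertex_connected V E \<longleftrightarrow>
     strongly_connected V E \<and> card V \<ge> 3 \<and> (\<forall>v. \<not> strong_articulation_point V E v)"

definition is_path :: "'a set \<Rightarrow> ('a \<times> 'a) set \<Rightarrow> 'a list \<Rightarrow> 'a \<Rightarrow> 'a \<Rightarrow> bool" where
  "is_path V E p a b \<longleftrightarrow> p \<noteq> [] \<and> hd p = a \<and> last p = b \<and> distinct p \<and> set p \<subseteq> V \<and>
     set (zip p (tl p)) \<subseteq> E"

definition path_edges :: "'a list \<Rightarrow> ('a \<times> 'a) set" where
  "path_edges p = set (zip p (tl p))"

definition twinless_sc :: "'a set \<Rightarrow> ('a \<times> 'a) set \<Rightarrow> 'a \<Rightarrow> 'a \<Rightarrow> bool" where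
  "twinless_sc V E a b \<longleftrightarrow> (\<exists>p q. is_path V E p a b \<and> is_path V E q b a \<and>
      (\<forall>x y. (x, y) \<in> path_edges p \<longrightarrow> (y, x) \<notin> path_edges q))"

definition tsccs :: "'a set \<Rightarrow> ('a \<times> 'a) set \<Rightarrow> 'a set set" where
  "tsccs V E = {{b \<in> V. twinless_sc V E a b} | a. a \<in> V}"

definition twinless_strongly_connected :: "'a set \<Rightarrow> ('a \<times> 'a) set \<Rightarrow> bool" where
  "twinless_strongly_connected V E \<longleftrightarrow> (\<exists>C. tsccs V E = {C})"

definition twinless_articulation_point :: "'a set \<Rightarrow> ('a \<times> 'a) set \<Rightarrow> 'a \<Rightarrow> bool" where
  "twinless_articulation_point V E v \<longleftrightarrow>
     twinless_strongly_connected V E \<and> v \<in> V \<and>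
     \<not> twinless_strongly_connected (fst (del_vertex V E v)) (snd (del_vertex V E v))"

definition two_vertex_twinless_connected :: "'a set \<Rightarrow> ('a \<times> 'a) set \<Rightarrow> bool" where
  "two_vertex_twinless_connected V E \<longleftrightarrow>
     twinless_strongly_connected V E \<and> card V \<ge> 3 \<and> (\<forall>v. \<not> twinless_articulation_point V E v)"

definition minimal_2vc_spanning_subgraph :: "'a set \<Rightarrow> ('a \<times> 'a) set \<Rightarrow> ('a \<times> 'a) set \<Rightarrow> bool" where
  "minimal_2vc_spanning_subgraph V E F \<longleftrightarrow>
     F \<subseteq> E \<and> two_vertex_connected V F \<and> (\<forall>e\<in>F. \<not> two_vertex_connected V (F - {e}))"

text \<open>One step of loop (4) of the algorithm. A state is (list of twinless articulation
  points of G_2v still to be processed, current edge set E_2t). The head x of the list is the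
  articulation point currently processed.\<close>
inductive alg_step :: "'a set \<Rightarrow> ('a \<times> 'a) set \<Rightarrow> 'a list \<times> ('a \<times> 'a) set \<Rightarrow> 'a list \<times> ('a \<times> 'a) set \<Rightarrow> bool"
  for V :: "'a set" and E :: "('a \<times> 'a) set" where
  add_edge: "\<not> twinless_strongly_connected (fst (del_vertex V F x)) (snd (del_vertex V F x))
     \<Longrightarrow> (v, w) \<in> E - F
     \<Longrightarrow> C1 \<in> tsccs (fst (del_vertex V F x)) (snd (del_vertex V F x))
     \<Longrightarrow> C2 \<in> tsccs (fst (del_vertex V F x)) (snd (del_vertex V F x))
     \<Longrightarrow> C1 \<noteq> C2 \<Longrightarrow> v \<in> C1 \<Longrightarrow> w \<in> C2
     \<Longrightarrow> alg_step V E (x # xs, F) (x # xs, insert (v, w) F)"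
| next_point: "twinless_strongly_connected (fst (del_vertex V F x)) (snd (del_vertex V F x))
     \<Longrightarrow> alg_step V E (x # xs, F) (xs, F)"

end

theory Submission
  imports Defs
begin

definition twf :: "('a \<times> 'a) set \<Rightarrow> bool" where
  "twf H \<longleftrightarrow> (\<forall>x y. (x, y) \<in> H \<longrightarrow> (y, x) \<notin> H)"

definition tw :: "'a set \<Rightarrow> ('a \<times> 'a) set \<Rightarrow> 'a \<Rightarrow> 'a \<Rightarrow> bool" where
  "tw V F a b \<longleftrightarrow> a \<in> V \<and> b \<in> V \<and>
     (\<exists>H. H \<subseteq> F \<inter> V \<times> V \<and> twf H \<and> (a, b) \<in> H\<^sup>* \<and> (b, a) \<in> H\<^sup>*)"

fun pe :: "'a list \<Rightarrow> ('a \<times> 'a) set" where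
  "pe [] = {}"
| "pe [x] = {}"
| "pe (x # y # l) = insert (x, y) (pe (y # l))"

lemma pe_zip: "set (zip p (tl p)) = pe p"
  by (induction p rule: pe.induct) auto

lemma pe_nth: "(x, y) \<in> pe p \<Longrightarrow> \<exists>i. Suc i < length p \<and> p ! i = x \<and> p ! Suc i = y"
proof (induction p rule: pe.induct)
  case (3 a b l)
  show ?case
  proof (cases "(x, y) = (a, b)")
    case True
    then show ?thesis by (intro exI[of _ 0]) auto
  next
    case False
    then have "(x, y) \<in> pe (b # l)" using 3(2) by auto
    from 3(1)[OF this] obtain i where "Suc i < length (b # l)" "(b # l) ! i = x" "(b # l) ! Suc i = y"
      by blast
    then show ?thesis by (intro exI[of _ "Suc i"]) auto
  qed
qed auto

lemma pe_twf: "distinct p \<Longrightarrow> twf (pe p)"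
  unfolding twf_def
proof (intro allI impI notI)
  fix x y
  assume d: "distinct p" and a: "(x, y) \<in> pe p" and b: "(y, x) \<in> pe p"
  from pe_nth[OF a] obtain i where i: "Suc i < length p" "p ! i = x" "p ! Suc i = y" by blast
  from pe_nth[OF b] obtain j where j: "Suc j < length p" "p ! j = y" "p ! Suc j = x" by blast
  have "i = Suc j" using d i j nth_eq_iff_index_eq by (metis Suc_lessD)
  moreover have "Suc i = j" using d i j nth_eq_iff_index_eq by (metis Suc_lessD)
  ultimately show False by simp
qed

lemma pe_reach: "p \<noteq> [] \<Longrightarrow> (hd p, last p) \<in> (pe p)\<^sup>*"
proof (induction p rule: pe.induct)
  case (3 a b l)
  have "(b, last (b # l)) \<in> (pe (b # l))\<^sup>*" using 3 by simp
  moreover have "(pe (b # l))\<^sup>* \<subseteq> (pe (a # b # l))\<^sup>*" by (rule rtrancl_mono) auto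
  ultimately have "(b, last (b # l)) \<in> (pe (a # b # l))\<^sup>*" by blast
  moreover have "(a, b) \<in> pe (a # b # l)" by simp
  ultimately have "(a, last (b # l)) \<in> (pe (a # b # l))\<^sup>*"
    by (rule converse_rtrancl_into_rtrancl[rotated])
  then show ?case by simp
qed auto

lemma pe_sub: "pe p \<subseteq> set p \<times> set p"
  by (induction p rule: pe.induct) auto

lemma pe_Cons: "pe l \<subseteq> pe (x # l)"
  by (cases l) auto

lemma pe_suffix: "pe ys \<subseteq> pe (xs @ ys)"
proof (induction xs)
  case (Cons a xs)
  then show ?case using pe_Cons[of "xs @ ys" a] by simp
qed simp

lemma path_exists:
  assumes "(a, b) \<in> R\<^sup>*"
  shows "\<exists>p. p \<noteq> [] \<and> hd p = a \<and> last p = b \<and> distinct p \<and> pe p \<subseteq> R \<and> set p \<subseteq> insert a (snd ` R)"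
  using assms
proof (induction rule: converse_rtrancl_induct)
  case base
  then show ?case by (intro exI[of _ "[b]"]) auto
next
  case (step a a')
  then obtain p where p: "p \<noteq> []" "hd p = a'" "last p = b" "distinct p" "pe p \<subseteq> R"
    "set p \<subseteq> insert a' (snd ` R)" by blast
  have a': "a' \<in> snd ` R" using step(1) by force
  show ?case
  proof (cases "a \<in> set p")
    case True
    then obtain xs ys where sp: "p = xs @ a # ys" by (meson split_list)
    show ?thesis
    proof (intro exI[of _ "a # ys"] conjI)
      show "last (a # ys) = b" using p(3) sp by simp
      show "distinct (a # ys)" using p(4) sp by simp
      show "pe (a # ys) \<subseteq> R" using p(5) sp pe_suffix[of "a # ys" xs] by blast
      show "set (a # ys) \<subseteq> insert a (snd ` R)" using p(6) sp a' by auto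
    qed auto
  next
    case False
    show ?thesis
    proof (intro exI[of _ "a # p"] conjI)
      have "pe (a # p) = insert (a, a') (pe p)" using p(1,2) by (cases p) auto
      then show "pe (a # p) \<subseteq> R" using p(5) step(1) by auto
      show "set (a # p) \<subseteq> insert a (snd ` R)" using p(6) a' by auto
    qed (use p False in auto)
  qed
qed

lemma twinless_sc_tw: "twinless_sc V E a b \<longleftrightarrow> tw V E a b"
proof
  assume "twinless_sc V E a b"
  then obtain p q where p: "is_path V E p a b" and q: "is_path V E q b a"
    and c: "\<forall>x y. (x, y) \<in> path_edges p \<longrightarrow> (y, x) \<notin> path_edges q"
    unfolding twinless_sc_def by blast
  let ?H = "pe p \<union> pe q"
  have pp: "p \<noteq> []" "hd p = a" "last p = b" "distinct p" "set p \<subseteq> V" "pe p \<subseteq> E"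
    using p unfolding is_path_def pe_zip by auto
  have qq: "q \<noteq> []" "hd q = b" "last q = a" "distinct q" "set q \<subseteq> V" "pe q \<subseteq> E"
    using q unfolding is_path_def pe_zip by auto
  have c': "\<forall>x y. (x, y) \<in> pe p \<longrightarrow> (y, x) \<notin> pe q" using c unfolding path_edges_def pe_zip .
  have "?H \<subseteq> E \<inter> V \<times> V" using pp qq pe_sub[of p] pe_sub[of q] by blast
  moreover have "twf ?H" using pe_twf[OF pp(4)] pe_twf[OF qq(4)] c' unfolding twf_def by blast
  moreover have "(a, b) \<in> ?H\<^sup>*" using pe_reach[OF pp(1)] pp rtrancl_mono[of "pe p" ?H] by auto
  moreover have "(b, a) \<in> ?H\<^sup>*" using pe_reach[OF qq(1)] qq rtrancl_mono[of "pe q" ?H] by auto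
  moreover have "a \<in> V" using pp by (metis hd_in_set subsetD)
  moreover have "b \<in> V" using pp by (metis last_in_set subsetD)
  ultimately show "tw V E a b" unfolding tw_def by blast
next
  assume "tw V E a b"
  then obtain H where a: "a \<in> V" "b \<in> V" and H: "H \<subseteq> E \<inter> V \<times> V" "twf H" "(a, b) \<in> H\<^sup>*" "(b, a) \<in> H\<^sup>*"
    unfolding tw_def by blast
  from path_exists[OF H(3)] obtain p where p: "p \<noteq> []" "hd p = a" "last p = b" "distinct p"
    "pe p \<subseteq> H" "set p \<subseteq> insert a (snd ` H)" by blast
  from path_exists[OF H(4)] obtain q where q: "q \<noteq> []" "hd q = b" "last q = a" "distinct q"
    "pe q \<subseteq> H" "set q \<subseteq> insert b (snd ` H)" by blast
  have sH: "snd ` H \<subseteq> V" using H(1) by auto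
  have "is_path V E p a b" unfolding is_path_def pe_zip using p a sH H(1) by auto
  moreover have "is_path V E q b a" unfolding is_path_def pe_zip using q a sH H(1) by auto
  moreover have "\<forall>x y. (x, y) \<in> path_edges p \<longrightarrow> (y, x) \<notin> path_edges q"
    unfolding path_edges_def pe_zip using p(5) q(5) H(2) unfolding twf_def by blast
  ultimately show "twinless_sc V E a b" unfolding twinless_sc_def by blast
qed

lemma scc_path:
  assumes X: "X = {u. (v, u) \<in> K\<^sup>* \<and> (u, v) \<in> K\<^sup>*}"
    and "(x, y) \<in> K\<^sup>*" "(v, x) \<in> K\<^sup>*" "(y, v) \<in> K\<^sup>*"
  shows "(x, y) \<in> (K \<inter> X \<times> X)\<^sup>*"
  using assms(2,3)
proof (induction rule: converse_rtrancl_induct)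
  case base
  show ?case by simp
next
  case (step x x')
  have vx': "(v, x') \<in> K\<^sup>*" by (rule rtrancl_into_rtrancl[OF step.prems step.hyps(1)])
  have x'v: "(x', v) \<in> K\<^sup>*" by (rule rtrancl_trans[OF step.hyps(2) assms(4)])
  have xv: "(x, v) \<in> K\<^sup>*" by (rule converse_rtrancl_into_rtrancl[OF step.hyps(1) x'v])
  have "x' \<in> X" unfolding X using vx' x'v by simp
  moreover have "x \<in> X" unfolding X using step.prems xv by simp
  ultimately have e: "(x, x') \<in> K \<inter> X \<times> X" using step.hyps(1) by simp
  show ?case by (rule converse_rtrancl_into_rtrancl[OF e step.IH[OF vx']])
qed

lemma scc_conn:
  assumes X: "X = {u. (v, u) \<in> K\<^sup>* \<and> (u, v) \<in> K\<^sup>*}" and "x \<in> X" "y \<in> X"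
  shows "(x, y) \<in> (K \<inter> X \<times> X)\<^sup>*"
proof -
  have xv: "(x, v) \<in> K\<^sup>*" "(v, x) \<in> K\<^sup>*" using assms(2) unfolding X by simp_all
  have yv: "(y, v) \<in> K\<^sup>*" "(v, y) \<in> K\<^sup>*" using assms(3) unfolding X by simp_all
  have "(x, y) \<in> K\<^sup>*" by (rule rtrancl_trans[OF xv(1) yv(2)])
  then show ?thesis using scc_path[OF X _ xv(2) yv(1)] by simp
qed

lemma merge:
  assumes X: "X = {u. (v, u) \<in> K\<^sup>* \<and> (u, v) \<in> K\<^sup>*}" and "twf K" "twf H"
  defines "S \<equiv> (K \<inter> X \<times> X) \<union> (H - X \<times> X)"
  shows "twf S" and "H\<^sup>* \<subseteq> S\<^sup>*" and "\<And>x y. x \<in> X \<Longrightarrow> y \<in> X \<Longrightarrow> (x, y) \<in> S\<^sup>*"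
proof -
  show "twf S" using assms(2,3) unfolding S_def twf_def by blast
  show c: "\<And>x y. x \<in> X \<Longrightarrow> y \<in> X \<Longrightarrow> (x, y) \<in> S\<^sup>*"
    using scc_conn[OF X] rtrancl_mono[of "K \<inter> X \<times> X" S] S_def by blast
  have "H \<subseteq> S\<^sup>*"
  proof
    fix e assume e0: "e \<in> H"
    obtain x y where e: "e = (x, y)" by (cases e)
    show "e \<in> S\<^sup>*"
    proof (cases "x \<in> X \<and> y \<in> X")
      case True
      then show ?thesis using c e by blast
    next
      case False
      then show ?thesis using e0 e S_def by blast
    qed
  qed
  then show "H\<^sup>* \<subseteq> S\<^sup>*" by (metis rtrancl_idemp rtrancl_mono)
qed

lemma tw_refl: "a \<in> V \<Longrightarrow> tw V F a a"
  unfolding tw_def twf_def by (intro conjI exI[of _ "{}"]) auto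

lemma tw_mono: "tw V F a b \<Longrightarrow> F \<subseteq> F' \<Longrightarrow> tw V F' a b"
  unfolding tw_def by blast

lemma tw_trans:
  assumes "tw V F a b" "tw V F b c"
  shows "tw V F a c"
proof -
  obtain H1 where H1: "H1 \<subseteq> F \<inter> V \<times> V" "twf H1" "(a, b) \<in> H1\<^sup>*" "(b, a) \<in> H1\<^sup>*" "a \<in> V"
    using assms(1) unfolding tw_def by blast
  obtain H2 where H2: "H2 \<subseteq> F \<inter> V \<times> V" "twf H2" "(b, c) \<in> H2\<^sup>*" "(c, b) \<in> H2\<^sup>*" "c \<in> V"
    using assms(2) unfolding tw_def by blast
  define X where "X = {u. (b, u) \<in> H1\<^sup>* \<and> (u, b) \<in> H1\<^sup>*}"
  define S where "S = (H1 \<inter> X \<times> X) \<union> (H2 - X \<times> X)"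
  note m = merge[OF X_def H1(2) H2(2), folded S_def]
  have aX: "a \<in> X" "b \<in> X" unfolding X_def using H1(3,4) by simp_all
  have 1: "S \<subseteq> F \<inter> V \<times> V" using H1(1) H2(1) unfolding S_def by blast
  have 2: "(a, c) \<in> S\<^sup>*" using rtrancl_trans[OF m(3)[OF aX] subsetD[OF m(2) H2(3)]] .
  have 3: "(c, a) \<in> S\<^sup>*" using rtrancl_trans[OF subsetD[OF m(2) H2(4)] m(3)[OF aX(2,1)]] .
  show ?thesis unfolding tw_def using 1 2 3 m(1) H1(5) H2(5) by (intro conjI exI[of _ S]) auto
qed

lemma tw_L:
  assumes "tw V (insert (v, w) F) a b" "tw V F v w"
  shows "tw V F a b"
proof -
  obtain H where H: "H \<subseteq> insert (v, w) F \<inter> V \<times> V" "twf H" "(a, b) \<in> H\<^sup>*" "(b, a) \<in> H\<^sup>*"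
    "a \<in> V" "b \<in> V"
    using assms(1) unfolding tw_def by blast
  obtain K where K: "K \<subseteq> F \<inter> V \<times> V" "twf K" "(v, w) \<in> K\<^sup>*" "(w, v) \<in> K\<^sup>*"
    using assms(2) unfolding tw_def by blast
  define X where "X = {u. (v, u) \<in> K\<^sup>* \<and> (u, v) \<in> K\<^sup>*}"
  define S where "S = (K \<inter> X \<times> X) \<union> (H - X \<times> X)"
  note m = merge[OF X_def K(2) H(2), folded S_def]
  have vX: "v \<in> X" "w \<in> X" unfolding X_def using K(3,4) by simp_all
  have 1: "S \<subseteq> F \<inter> V \<times> V" using H(1) K(1) vX unfolding S_def by blast
  have 2: "(a, b) \<in> S\<^sup>*" "(b, a) \<in> S\<^sup>*" using subsetD[OF m(2) H(3)] subsetD[OF m(2) H(4)] by auto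
  show ?thesis unfolding tw_def using 1 2 m(1) H(5,6) by (intro conjI exI[of _ S]) auto
qed

lemma tw_iter:
  assumes "finite D"
  shows "(\<And>v w. (v, w) \<in> D \<Longrightarrow> tw V F v w) \<Longrightarrow> tw V (F \<union> D) a b \<Longrightarrow> tw V F a b"
  using assms
proof (induction D arbitrary: a b rule: finite_induct)
  case empty
  then show ?case by simp
next
  case (insert e D)
  obtain v w where e: "e = (v, w)" by (cases e)
  have "tw V F v w" using insert.prems(1)[of v w] e by simp
  then have 1: "tw V (F \<union> D) v w" by (rule tw_mono) simp
  have 2: "tw V (insert (v, w) (F \<union> D)) a b" using insert.prems(2) e by simp
  have "tw V (F \<union> D) a b" by (rule tw_L[OF 2 1])
  then show ?case by (rule insert.IH[rotated]) (rule insert.prems(1), simp)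
qed

lemma tsccs_tw: "tsccs V F = (\<lambda>a. {b \<in> V. tw V F a b}) ` V"
  unfolding tsccs_def Setcompr_eq_image twinless_sc_tw by (rule refl)

lemma tsc_iff:
  "twinless_strongly_connected V F \<longleftrightarrow> V \<noteq> {} \<and> (\<forall>a\<in>V. \<forall>b\<in>V. tw V F a b)"
proof
  assume "twinless_strongly_connected V F"
  then obtain C where C: "(\<lambda>a. {b \<in> V. tw V F a b}) ` V = {C}"
    unfolding twinless_strongly_connected_def tsccs_tw by blast
  have cl: "{b \<in> V. tw V F a b} = C" if "a \<in> V" for a
  proof -
    have "{b \<in> V. tw V F a b} \<in> (\<lambda>a. {b \<in> V. tw V F a b}) ` V" by (rule imageI[OF that])
    then show ?thesis unfolding C by simp
  qed
  have "V \<noteq> {}"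
  proof
    assume "V = {}"
    then have "(\<lambda>a. {b \<in> V. tw V F a b}) ` V = {}" by simp
    then show False using C by simp
  qed
  moreover have "\<forall>a\<in>V. \<forall>b\<in>V. tw V F a b"
  proof (intro ballI)
    fix a b assume ab: "a \<in> V" "b \<in> V"
    have "b \<in> {c \<in> V. tw V F b c}" using ab tw_refl by simp
    then have "b \<in> C" unfolding cl[OF ab(2)] .
    then have "b \<in> {b \<in> V. tw V F a b}" unfolding cl[OF ab(1)] .
    then show "tw V F a b" by simp
  qed
  ultimately show "V \<noteq> {} \<and> (\<forall>a\<in>V. \<forall>b\<in>V. tw V F a b)" by simp
next
  assume A: "V \<noteq> {} \<and> (\<forall>a\<in>V. \<forall>b\<in>V. tw V F a b)"
  have e: "{b \<in> V. tw V F a b} = V" if "a \<in> V" for a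
    using A that by blast
  have "(\<lambda>a. {b \<in> V. tw V F a b}) ` V = (\<lambda>a. V) ` V" by (rule image_cong[OF refl e])
  also have "\<dots> = {V}" using A by (simp add: image_constant_conv)
  finally show "twinless_strongly_connected V F"
    unfolding twinless_strongly_connected_def tsccs_tw by blast
qed

lemma tsc_mono: "twinless_strongly_connected V F \<Longrightarrow> F \<subseteq> F' \<Longrightarrow> twinless_strongly_connected V F'"
  unfolding tsc_iff by (metis tw_mono)

lemma del_tsc_mono:
  assumes "twinless_strongly_connected (fst (del_vertex V F x)) (snd (del_vertex V F x))" "F \<subseteq> F'"
  shows "twinless_strongly_connected (fst (del_vertex V F' x)) (snd (del_vertex V F' x))"
proof -
  have "twinless_strongly_connected (V - {x}) {(a, b). (a, b) \<in> F \<and> a \<noteq> x \<and> b \<noteq> x}"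
    using assms(1) unfolding del_vertex_def by simp
  then have "twinless_strongly_connected (V - {x}) {(a, b). (a, b) \<in> F' \<and> a \<noteq> x \<and> b \<noteq> x}"
    by (rule tsc_mono) (use assms(2) in blast)
  then show ?thesis unfolding del_vertex_def by simp
qed


lemma tvc_edge:
  assumes a: "two_vertex_connected V F" and e: "(u, w) \<in> F" "u \<in> V" "w \<in> V"
  shows "tw V F u w"
proof (cases "u = w")
  case True
  then show ?thesis using tw_refl e(2) by simp
next
  case False
  have card: "card V \<ge> 3" using a unfolding two_vertex_connected_def by simp
  obtain c where c: "c \<in> V" "c \<noteq> u" "c \<noteq> w"
  proof -
    have "\<not> V \<subseteq> {u, w}"
    proof
      assume "V \<subseteq> {u, w}"
      then have "card V \<le> card {u, w}" by (rule card_mono[rotated]) simp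
      also have "\<dots> \<le> 2" by (simp add: card_insert_if)
      finally show False using card by simp
    qed
    then show ?thesis using that by blast
  qed
  have sc: "strongly_connected V F" and nsap: "\<And>z. \<not> strong_articulation_point V F z"
    using a unfolding two_vertex_connected_def by simp_all
  have conn: "(x, y) \<in> ({(x, y). (x, y) \<in> F \<and> x \<noteq> z \<and> y \<noteq> z} \<inter> (V - {z}) \<times> (V - {z}))\<^sup>*"
    if "z \<in> V" "x \<in> V - {z}" "y \<in> V - {z}" for z x y
  proof -
    have "strongly_connected (V - {z}) {(x, y). (x, y) \<in> F \<and> x \<noteq> z \<and> y \<noteq> z}"
      using nsap[of z] sc that(1) unfolding strong_articulation_point_def del_vertex_def by simp
    then show ?thesis using that(2,3) unfolding strongly_connected_def by blast
  qed
  define R1 where "R1 = {(x, y). (x, y) \<in> F \<and> x \<noteq> u \<and> y \<noteq> u} \<inter> (V - {u}) \<times> (V - {u})"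
  define R2 where "R2 = {(x, y). (x, y) \<in> F \<and> x \<noteq> w \<and> y \<noteq> w} \<inter> (V - {w}) \<times> (V - {w})"
  have wu1: "w \<in> V - {u}" "c \<in> V - {u}" using e(3) c False by auto
  have wu2: "c \<in> V - {w}" "u \<in> V - {w}" using e(2) c False by auto
  have 1: "(w, c) \<in> R1\<^sup>*" unfolding R1_def by (rule conn[OF e(2) wu1])
  have 2: "(c, u) \<in> R2\<^sup>*" unfolding R2_def by (rule conn[OF e(3) wu2])
  have m1: "R1\<^sup>* \<subseteq> (R1 \<union> R2)\<^sup>*" by (rule rtrancl_mono) simp
  have m2: "R2\<^sup>* \<subseteq> (R1 \<union> R2)\<^sup>*" by (rule rtrancl_mono) simp
  have wu: "(w, u) \<in> (R1 \<union> R2)\<^sup>*" by (rule rtrancl_trans[OF subsetD[OF m1 1] subsetD[OF m2 2]])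
  obtain q where q: "q \<noteq> []" "hd q = w" "last q = u" "distinct q" "pe q \<subseteq> R1 \<union> R2"
    using path_exists[OF wu] by blast
  have RF: "R1 \<union> R2 \<subseteq> F \<inter> V \<times> V" unfolding R1_def R2_def by blast
  have nwu: "(w, u) \<notin> R1 \<union> R2" unfolding R1_def R2_def by blast
  define H where "H = insert (u, w) (pe q)"
  have h1: "H \<subseteq> F \<inter> V \<times> V" unfolding H_def using q(5) RF e by blast
  have pt: "twf (pe q)" by (rule pe_twf[OF q(4)])
  have h2: "twf H" unfolding twf_def H_def
  proof (intro allI impI notI)
    fix x y assume xy: "(x, y) \<in> insert (u, w) (pe q)" and yx: "(y, x) \<in> insert (u, w) (pe q)"
    have "(w, u) \<notin> pe q" using nwu q(5) by blast
    then show False using xy yx pt False unfolding twf_def by blast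
  qed
  have h3: "(u, w) \<in> H\<^sup>*" unfolding H_def by (rule r_into_rtrancl) simp
  have "(pe q)\<^sup>* \<subseteq> H\<^sup>*" by (rule rtrancl_mono) (simp add: H_def subset_insertI)
  moreover have "(w, u) \<in> (pe q)\<^sup>*" using pe_reach[OF q(1)] unfolding q(2,3) .
  ultimately have h4: "(w, u) \<in> H\<^sup>*" by blast
  show ?thesis unfolding tw_def using h1 h2 h3 h4 e(2,3) by (intro conjI exI[of _ H])
qed

lemma tvc_tsc:
  assumes a: "two_vertex_connected V F"
  shows "twinless_strongly_connected V F"
proof -
  have reach: "tw V F x y" if r: "(x, y) \<in> (F \<inter> V \<times> V)\<^sup>*" and xV: "x \<in> V" for x y
    using r
  proof (induction rule: rtrancl_induct)
    case base
    show ?case by (rule tw_refl[OF xV])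
  next
    case (step y z)
    have "tw V F y z" using tvc_edge[OF a] step.hyps(2) by blast
    then show ?case by (rule tw_trans[OF step.IH])
  qed
  have "card V \<ge> 3" using a unfolding two_vertex_connected_def by simp
  then have Vne: "V \<noteq> {}" by auto
  have sc: "\<forall>x\<in>V. \<forall>y\<in>V. (x, y) \<in> (F \<inter> V \<times> V)\<^sup>*"
    using a unfolding two_vertex_connected_def strongly_connected_def by simp
  show ?thesis unfolding tsc_iff using reach sc Vne by simp
qed

definition inv_st :: "'a set \<Rightarrow> ('a \<times> 'a) set \<Rightarrow> ('a \<times> 'a) set \<Rightarrow> 'a list \<Rightarrow> 'a list \<times> ('a \<times> 'a) set \<Rightarrow> bool" where
  "inv_st V E E2v xs s = (case s of (ys, F) \<Rightarrow> E2v \<subseteq> F \<and> F \<subseteq> E \<and>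
     (\<exists>pre. xs = pre @ ys \<and>
        (\<forall>x\<in>set pre. twinless_strongly_connected (fst (del_vertex V F x)) (snd (del_vertex V F x)))))"

lemma step_inv:
  assumes "alg_step V E s t" "inv_st V E E2v xs s"
  shows "inv_st V E E2v xs t"
  using assms
proof (induction rule: alg_step.induct)
  case (add_edge F x v w C1 C2 ys)
  then obtain pre where p: "E2v \<subseteq> F" "F \<subseteq> E" "xs = pre @ x # ys"
    "\<forall>y\<in>set pre. twinless_strongly_connected (fst (del_vertex V F y)) (snd (del_vertex V F y))"
    unfolding inv_st_def by auto
  have "\<forall>y\<in>set pre. twinless_strongly_connected (fst (del_vertex V (insert (v, w) F) y))
      (snd (del_vertex V (insert (v, w) F) y))"
    using p(4) del_tsc_mono[of V F _ "insert (v, w) F"] by blast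
  moreover have "insert (v, w) F \<subseteq> E" using p(2) add_edge.hyps(2) by blast
  ultimately show ?case unfolding inv_st_def using p(1,3) by blast
next
  case (next_point F x ys)
  then obtain pre where p: "E2v \<subseteq> F" "F \<subseteq> E" "xs = pre @ x # ys"
    "\<forall>y\<in>set pre. twinless_strongly_connected (fst (del_vertex V F y)) (snd (del_vertex V F y))"
    unfolding inv_st_def by auto
  have "xs = (pre @ [x]) @ ys" using p(3) by simp
  moreover have "\<forall>y\<in>set (pre @ [x]). twinless_strongly_connected (fst (del_vertex V F y)) (snd (del_vertex V F y))"
    using p(4) next_point.hyps by simp
  ultimately show ?case unfolding inv_st_def using p(1,2) by blast
qed

lemma progress:
  assumes finV: "finite V" and EV: "E \<subseteq> V \<times> V"
    and tscE: "twinless_strongly_connected V E"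
    and noTAP: "\<And>v. \<not> twinless_articulation_point V E v"
    and card: "card V \<ge> 3" and FE: "F \<subseteq> E" and xV: "x \<in> V"
  shows "\<exists>s. alg_step V E (x # ys, F) s"
proof (cases "twinless_strongly_connected (fst (del_vertex V F x)) (snd (del_vertex V F x))")
  case True
  show ?thesis by (rule exI[of _ "(ys, F)"], rule alg_step.next_point[OF True])
next
  case False
  define V' where "V' = V - {x}"
  define Fx where "Fx = {(a, b). (a, b) \<in> F \<and> a \<noteq> x \<and> b \<noteq> x}"
  define Ex where "Ex = {(a, b). (a, b) \<in> E \<and> a \<noteq> x \<and> b \<noteq> x}"
  have dF: "fst (del_vertex V F x) = V'" "snd (del_vertex V F x) = Fx"
    by (simp_all add: del_vertex_def V'_def Fx_def)
  have tscEx: "twinless_strongly_connected V' Ex"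
    using tscE noTAP[of x] xV unfolding twinless_articulation_point_def del_vertex_def V'_def Ex_def
    by simp
  show ?thesis
  proof (rule ccontr)
    assume ns: "\<not> (\<exists>s. alg_step V E (x # ys, F) s)"
    define D where "D = Ex - Fx"
    have "D \<subseteq> V \<times> V" unfolding D_def Ex_def using EV by blast
    moreover have "finite (V \<times> V)" using finV by simp
    ultimately have finD: "finite D" by (rule finite_subset)
    have Dtw: "tw V' Fx v w" if vw: "(v, w) \<in> D" for v w
    proof -
      have vV: "v \<in> V'" "w \<in> V'" "(v, w) \<in> E - F"
        using vw EV unfolding D_def Ex_def Fx_def V'_def by auto
      let ?C1 = "{b \<in> V'. twinless_sc V' Fx v b}"
      let ?C2 = "{b \<in> V'. twinless_sc V' Fx w b}"
      have C1: "?C1 \<in> tsccs V' Fx" unfolding tsccs_def using vV by blast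
      have C2: "?C2 \<in> tsccs V' Fx" unfolding tsccs_def using vV by blast
      have v1: "v \<in> ?C1" using vV(1) tw_refl[OF vV(1)] by (simp add: twinless_sc_tw)
      have w2: "w \<in> ?C2" using vV(2) tw_refl[OF vV(2)] by (simp add: twinless_sc_tw)
      have eq: "?C1 = ?C2"
      proof (rule ccontr)
        assume ne: "?C1 \<noteq> ?C2"
        have "alg_step V E (x # ys, F) (x # ys, insert (v, w) F)"
          by (rule alg_step.add_edge[where ?C1.0 = ?C1 and ?C2.0 = ?C2])
             (use False dF C1 C2 ne v1 w2 vV in simp_all)
        then show False using ns by blast
      qed
      have "w \<in> ?C1" using w2 unfolding eq .
      then show ?thesis by (simp add: twinless_sc_tw)
    qed
    have all: "tw V' Fx a b" if ab: "a \<in> V'" "b \<in> V'" for a b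
    proof -
      have "tw V' Ex a b" using tscEx ab unfolding tsc_iff by blast
      moreover have "Ex \<subseteq> Fx \<union> D" unfolding D_def by blast
      ultimately have "tw V' (Fx \<union> D) a b" by (rule tw_mono)
      then show ?thesis using tw_iter[OF finD Dtw] by simp
    qed
    have "V' \<noteq> {}"
    proof
      assume "V' = {}"
      then have "V \<subseteq> {x}" unfolding V'_def by blast
      then have "card V \<le> card {x}" by (rule card_mono[rotated]) simp
      then show False using card by simp
    qed
    then have "twinless_strongly_connected V' Fx" unfolding tsc_iff using all by blast
    then show False using False dF by simp
  qed
qed

theorem mainTheorem3:
  fixes V :: "'a set" and E E2v :: "('a \<times> 'a) set" and xs :: "'a list"
  assumes "finite V"
    and "E \<subseteq> V \<times> V"
    and "two_vertex_twinless_connected V E"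
    and "minimal_2vc_spanning_subgraph V E E2v"
    and "distinct xs"
    and "set xs = {x. twinless_articulation_point V E2v x}"
  shows "(\<forall>E2t. (alg_step V E)\<^sup>*\<^sup>* (xs, E2v) ([], E2t) \<longrightarrow> two_vertex_twinless_connected V E2t)
       \<and> (\<forall>ys F. (alg_step V E)\<^sup>*\<^sup>* (xs, E2v) (ys, F) \<longrightarrow> ys = [] \<or> (\<exists>s. alg_step V E (ys, F) s))"
proof -
  have E2v: "E2v \<subseteq> E" "two_vertex_connected V E2v"
    using assms(4) unfolding minimal_2vc_spanning_subgraph_def by simp_all
  have tscE2v: "twinless_strongly_connected V E2v" using tvc_tsc[OF E2v(2)] .
  have card3: "card V \<ge> 3" using E2v(2) unfolding two_vertex_connected_def by simp
  have xsV: "set xs \<subseteq> V" using assms(6) unfolding twinless_articulation_point_def by auto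
  have tscE: "twinless_strongly_connected V E" and noTAP: "\<And>v. \<not> twinless_articulation_point V E v"
    using assms(3) unfolding two_vertex_twinless_connected_def by simp_all
  have reach: "inv_st V E E2v xs s" if "(alg_step V E)\<^sup>*\<^sup>* (xs, E2v) s" for s
    using that
  proof (induction rule: rtranclp_induct)
    case base
    show ?case unfolding inv_st_def using E2v(1) by simp
  next
    case (step s t)
    then show ?case using step_inv by blast
  qed
  have part1: "two_vertex_twinless_connected V E2t" if r: "(alg_step V E)\<^sup>*\<^sup>* (xs, E2v) ([], E2t)" for E2t
  proof -
    have I: "E2v \<subseteq> E2t"
      "\<forall>x\<in>set xs. twinless_strongly_connected (fst (del_vertex V E2t x)) (snd (del_vertex V E2t x))"
      using reach[OF r] unfolding inv_st_def by auto
    have "twinless_strongly_connected V E2t" by (rule tsc_mono[OF tscE2v I(1)])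
    moreover have "\<not> twinless_articulation_point V E2t v" for v
    proof
      assume tap: "twinless_articulation_point V E2t v"
      then have vV: "v \<in> V" and nt: "\<not> twinless_strongly_connected (fst (del_vertex V E2t v)) (snd (del_vertex V E2t v))"
        unfolding twinless_articulation_point_def by simp_all
      show False
      proof (cases "v \<in> set xs")
        case True
        then show False using I(2) nt by blast
      next
        case False
        then have "\<not> twinless_articulation_point V E2v v" using assms(6) by simp
        then have "twinless_strongly_connected (fst (del_vertex V E2v v)) (snd (del_vertex V E2v v))"
          using tscE2v vV unfolding twinless_articulation_point_def by simp
        then show False using del_tsc_mono[OF _ I(1)] nt by blast
      qed
    qed
    ultimately show ?thesis unfolding two_vertex_twinless_connected_def using card3 by blast
  qed
  have part2: "ys = [] \<or> (\<exists>s. alg_step V E (ys, F) s)" if r: "(alg_step V E)\<^sup>*\<^sup>* (xs, E2v) (ys, F)" for ys F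
  proof (cases ys)
    case Nil
    then show ?thesis by simp
  next
    case (Cons x ys')
    obtain pre where I: "F \<subseteq> E" "xs = pre @ ys"
      using reach[OF r] unfolding inv_st_def by auto
    have "x \<in> V" using I(2) Cons xsV by auto
    then show ?thesis using progress[OF assms(1,2) tscE noTAP card3 I(1)] Cons by blast
  qed
  show ?thesis using part1 part2 by blast
qed

end
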